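(* Let $Z:\Sigma\to\widetilde{\Lambda^C(Y)}$ be a section of $\sigma^C$, given in the local coordinates described in the context by $(t_1,t_2)\mapsto (t_1,t_2,q^a_1,q^a_2,P^a_1,P^a_2)$, and let $h$ be a complex-regularized Hamiltonian section given locally by $p=-H(t_1,t_2,q^a_1,q^a_2,P^a_1,P^a_2)$. Then $Z$ is a solution of $h$ (on this coordinate chart) if and only if, for all $a=1,\dots,n$, \begin{align*} \frac{\partial H}{\partial q^a_1} &= -\partial_1 P^a_1 + \partial_2 P^a_2, & \frac{\partial H}{\partial q^a_2} &= -\partial_1 P^a_2 - \partial_2 P^a_1,\\ \frac{\partial H}{\partial P^a_1} &= \partial_1 q^a_1 + \partial_2 q^a_2, & \frac{\partial H}{\partial P^a_2} &= \partial_1 q^a_2 - \partial_2 q^a_1, \end{align*} where $\partial_k=\partial/\partial t_k$ and the left-hand sides are evaluated at $Z(t)$.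
   Context: Let $(\Sigma,j)$ be a Riemann surface and $\pi:(Y,i)\to(\Sigma,j)$ a holomorphic fiber bundle (i.e. $(Y,i)$ is a complex manifold, $d\pi\circ i=j\circ d\pi$, and $Y$ is locally biholomorphic to a product). The extended multimomentum bundle is $\Lambda^2_2(Y)=\{\lambda\in\Lambda^2T^*Y:\ \lambda(u,v)=0\text{ for all }u,v\in\ker d\pi\}$ with projection $\kappa:\Lambda^2_2(Y)\to Y$, and $\Lambda^C(Y)=\{\lambda\in\Lambda^2_2(Y):\lambda(i\cdot,i\cdot)=\lambda\}$. The tautological 2-form $\Theta$ on $\Lambda^C(Y)$ is $\Theta_\lambda(X_1,X_2)=\lambda(d\kappa X_1,d\kappa X_2)$, and $\Omega=d\Theta$. One has $\pi^*\Lambda^2(\Sigma)\subseteq\Lambda^C(Y)$; set $\widetilde{\Lambda^C(Y)}=\Lambda^C(Y)/\pi^*\Lambda^2(\Sigma)$ (fiberwise quotient over $Y$), with quotient map $\mu^C:\Lambda^C(Y)\to\widetilde{\Lambda^C(Y)}$ and projection $\sigma^C:\widetilde{\Lambda^C(Y)}\to\Sigma$. A complex-regularized Hamiltonian section is a smooth section $h$ of $\mu^C$; put $\Theta^h=h^*\Theta$, $\Omega^h=h^*\Omega$. A section $Z$ of $\sigma^C$ is a solution of $h$ if $Z^*(X\lrcorner\Omega^h)=0$ for all vector fields $X$ on $\widetilde{\Lambda^C(Y)}$. Local coordinates: choose local coordinates $(t_1,t_2)$ on $\Sigma$ and $(t_1,t_2,q^a_1,q^a_2)_{a=1}^n$ on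 $Y$ with $j\partial_{t_1}=\partial_{t_2}$ and $i\,\partial_{q^a_1}=\partial_{q^a_2}$. Every element of $\Lambda^C(Y)$ over such a chart is uniquely of the form $\lambda=p\,dt_1\wedge dt_2+\sum_a(P^a_1dq^a_1+P^a_2dq^a_2)\wedge dt_2-\sum_a(P^a_1dq^a_2-P^a_2dq^a_1)\wedge dt_1$, giving coordinates $(t_1,t_2,q^a_1,q^a_2,P^a_1,P^a_2,p)$ on $\Lambda^C(Y)$ and $(t_1,t_2,q^a_1,q^a_2,P^a_1,P^a_2)$ on $\widetilde{\Lambda^C(Y)}$. A Hamiltonian section is then locally of the form $p=-H(t,q,P)$ for a smooth local function $H$. *)

theory Defs
  imports "HOL-Analysis.Analysis"
begin

text \<open>The index a ranges over the finite type 'n (so n = CARD('n)).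
  Points of Y over the chart: ((t1,t2),(q1,q2)).
  Points of the reduced bundle (tilde Lambda^C): (((t1,t2),(q1,q2)),(P1,P2)).
  Points of Lambda^C: ((((t1,t2),(q1,q2)),(P1,P2)), p).
  Tangent vectors are elements of the same vector spaces (coordinate chart).\<close>

type_synonym 'n ypt = "(real \<times> real) \<times> ((real^'n) \<times> (real^'n))"
type_synonym 'n rpt = "'n ypt \<times> ((real^'n) \<times> (real^'n))"
type_synonym 'n cpt = "'n rpt \<times> real"

definition dt1 :: "'n::finite ypt \<Rightarrow> real" where "dt1 u = fst (fst u)"
definition dt2 :: "'n::finite ypt \<Rightarrow> real" where "dt2 u = snd (fst u)"
definition dq1 :: "'n::finite \<Rightarrow> 'n ypt \<Rightarrow> real" where "dq1 a u = fst (snd u) $ a"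
definition dq2 :: "'n::finite \<Rightarrow> 'n ypt \<Rightarrow> real" where "dq2 a u = snd (snd u) $ a"

definition wedge :: "('v \<Rightarrow> real) \<Rightarrow> ('v \<Rightarrow> real) \<Rightarrow> 'v \<Rightarrow> 'v \<Rightarrow> real" where
  "wedge \<alpha> \<beta> u v = \<alpha> u * \<beta> v - \<alpha> v * \<beta> u"

text \<open>The element of Lambda^C(Y) with coordinates (P1,P2,p), as a bilinear form on T Y.\<close>
definition lamC :: "real \<Rightarrow> real^'n::finite \<Rightarrow> real^'n \<Rightarrow> 'n ypt \<Rightarrow> 'n ypt \<Rightarrow> real" where
  "lamC p P1 P2 u v =
     p * wedge dt1 dt2 u v
     + (\<Sum>a\<in>UNIV. wedge (\<lambda>w. P1 $ a * dq1 a w + P2 $ a * dq2 a w) dt2 u v)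
     - (\<Sum>a\<in>UNIV. wedge (\<lambda>w. P1 $ a * dq2 a w - P2 $ a * dq1 a w) dt1 u v)"

text \<open>Projection kappa : Lambda^C(Y) \<rightarrow> Y (linear in coordinates, so d kappa = kappa).\<close>
definition kappa :: "'n::finite cpt \<Rightarrow> 'n ypt" where "kappa x = fst (fst x)"

definition Theta :: "'n::finite cpt \<Rightarrow> 'n cpt \<Rightarrow> 'n cpt \<Rightarrow> real" where
  "Theta x X1 X2 = lamC (snd x) (fst (snd (fst x))) (snd (snd (fst x))) (kappa X1) (kappa X2)"

text \<open>Exterior derivative of a 2-form on a vector space (evaluated on constant vectors).\<close>
definition ext_d2 :: "('a::real_normed_vector \<Rightarrow> 'a \<Rightarrow> 'a \<Rightarrow> real) \<Rightarrow> 'a \<Rightarrow> 'a \<Rightarrow> 'a \<Rightarrow> 'a \<Rightarrow> real" where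
  "ext_d2 \<theta> x u v w =
     frechet_derivative (\<lambda>y. \<theta> y v w) (at x) u
     - frechet_derivative (\<lambda>y. \<theta> y u w) (at x) v
     + frechet_derivative (\<lambda>y. \<theta> y u v) (at x) w"

definition Omega :: "'n::finite cpt \<Rightarrow> 'n cpt \<Rightarrow> 'n cpt \<Rightarrow> 'n cpt \<Rightarrow> real" where
  "Omega = ext_d2 Theta"

definition pull3 :: "('a::real_normed_vector \<Rightarrow> 'b::real_normed_vector) \<Rightarrow> ('b \<Rightarrow> 'b \<Rightarrow> 'b \<Rightarrow> 'b \<Rightarrow> real)
    \<Rightarrow> 'a \<Rightarrow> 'a \<Rightarrow> 'a \<Rightarrow> 'a \<Rightarrow> real" where
  "pull3 f \<omega> x u v w = \<omega> (f x) (frechet_derivative f (at x) u)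
      (frechet_derivative f (at x) v) (frechet_derivative f (at x) w)"

definition pull2 :: "('a::real_normed_vector \<Rightarrow> 'b::real_normed_vector) \<Rightarrow> ('b \<Rightarrow> 'b \<Rightarrow> 'b \<Rightarrow> real)
    \<Rightarrow> 'a \<Rightarrow> 'a \<Rightarrow> 'a \<Rightarrow> real" where
  "pull2 f \<omega> x u v = \<omega> (f x) (frechet_derivative f (at x) u) (frechet_derivative f (at x) v)"

definition contract :: "('b \<Rightarrow> 'b) \<Rightarrow> ('b \<Rightarrow> 'b \<Rightarrow> 'b \<Rightarrow> 'b \<Rightarrow> real) \<Rightarrow> 'b \<Rightarrow> 'b \<Rightarrow> 'b \<Rightarrow> real" where
  "contract X \<omega> x u v = \<omega> x (X x) u v"

definition hsec :: "('n::finite rpt \<Rightarrow> real) \<Rightarrow> 'n rpt \<Rightarrow> 'n cpt" where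
  "hsec H x = (x, - H x)"

definition OmegaH :: "('n::finite rpt \<Rightarrow> real) \<Rightarrow> 'n rpt \<Rightarrow> 'n rpt \<Rightarrow> 'n rpt \<Rightarrow> 'n rpt \<Rightarrow> real" where
  "OmegaH H = pull3 (hsec H) Omega"

definition Zsec :: "(real \<times> real \<Rightarrow> real^'n::finite) \<Rightarrow> (real \<times> real \<Rightarrow> real^'n) \<Rightarrow> (real \<times> real \<Rightarrow> real^'n)
    \<Rightarrow> (real \<times> real \<Rightarrow> real^'n) \<Rightarrow> real \<times> real \<Rightarrow> 'n rpt" where
  "Zsec q1 q2 P1 P2 t = ((t, (q1 t, q2 t)), (P1 t, P2 t))"

definition is_solution_on :: "(real \<times> real) set \<Rightarrow> ('n::finite rpt \<Rightarrow> real) \<Rightarrow> (real \<times> real \<Rightarrow> 'n rpt) \<Rightarrow> bool" where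
  "is_solution_on U H Z \<longleftrightarrow>
     (\<forall>X :: 'n rpt \<Rightarrow> 'n rpt. \<forall>t\<in>U. \<forall>w1 w2. pull2 Z (contract X (OmegaH H)) t w1 w2 = 0)"


end

theory Submission imports Defs "HOL-Library.Product_Plus" begin

lemma Theta_lin1: "linear (\<lambda>u. Theta u v w)"
  unfolding linear_iff
  by (simp add: Theta_def lamC_def wedge_def kappa_def dt1_def dt2_def dq1_def dq2_def
      algebra_simps sum.distrib sum_distrib_left sum_subtractf)

lemma Theta_lin2: "linear (\<lambda>v. Theta u v w)"
  unfolding linear_iff
  by (simp add: Theta_def lamC_def wedge_def kappa_def dt1_def dt2_def dq1_def dq2_def
      algebra_simps sum.distrib sum_distrib_left sum_subtractf)

lemma Theta_lin3: "linear (\<lambda>w. Theta u v w)"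
  unfolding linear_iff
  by (simp add: Theta_def lamC_def wedge_def kappa_def dt1_def dt2_def dq1_def dq2_def
      algebra_simps sum.distrib sum_distrib_left sum_subtractf)

lemma Theta_anti: "Theta u v w = - Theta u w v"
  by (simp add: Theta_def lamC_def wedge_def algebra_simps sum_negf[symmetric] sum_subtractf)

lemma Theta_deriv: "frechet_derivative (\<lambda>y. Theta y v w) (at x) = (\<lambda>u. Theta u v w)"
  by (rule frechet_derivative_at[symmetric], rule bounded_linear_imp_has_derivative,
      rule linear_conv_bounded_linear[THEN iffD1], rule Theta_lin1)

definition Om :: "'n::finite cpt \<Rightarrow> 'n cpt \<Rightarrow> 'n cpt \<Rightarrow> real" where
  "Om u v w = Theta u v w - Theta v u w + Theta w u v"

lemma Omega_eq: "Omega x u v w = Om u v w"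
  by (simp add: Omega_def ext_d2_def Theta_deriv Om_def)


lemma Om_lin1: "linear (\<lambda>u. Om u v w)"
  using Theta_lin1[of v w] Theta_lin2[of v w] Theta_lin2[of w v]
  unfolding Om_def linear_iff by (simp add: algebra_simps)
lemma Om_lin2: "linear (\<lambda>v. Om u v w)"
  using Theta_lin2[of u w] Theta_lin1[of u w] Theta_lin3[of w u]
  unfolding Om_def linear_iff by (simp add: algebra_simps)
lemma Om_lin3: "linear (\<lambda>w. Om u v w)"
  using Theta_lin1[of u v] Theta_lin3[of u v] Theta_lin3[of v u]
  unfolding Om_def linear_iff by (simp add: algebra_simps)

lemma Om_alt1: "Om u u w = 0"
  using Theta_anti[of w u u] by (simp add: Om_def)
lemma Om_alt2: "Om u v v = 0"
  using Theta_anti[of u v v] by (simp add: Om_def)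
lemma Om_alt3: "Om u v u = 0"
  using Theta_anti[of u v u] Theta_anti[of v u u] by (simp add: Om_def)

definition lift :: "('n::finite rpt \<Rightarrow> real) \<Rightarrow> 'n rpt \<Rightarrow> 'n cpt" where
  "lift L V = (V, - L V)"

lemma lift_lin: "linear L \<Longrightarrow> linear (lift L)"
  unfolding lift_def linear_iff by (simp add: algebra_simps)

definition Psi :: "('n::finite rpt \<Rightarrow> real) \<Rightarrow> 'n rpt \<Rightarrow> 'n rpt \<Rightarrow> 'n rpt \<Rightarrow> real" where
  "Psi L V A B = Om (lift L V) (lift L A) (lift L B)"

lemma Psi_lin1: "linear L \<Longrightarrow> linear (\<lambda>V. Psi L V A B)"
  unfolding Psi_def using linear_compose[OF lift_lin Om_lin1] by (simp add: o_def)
lemma Psi_lin2: "linear L \<Longrightarrow> linear (\<lambda>V. Psi L A V B)"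
  unfolding Psi_def using linear_compose[OF lift_lin Om_lin2] by (simp add: o_def)
lemma Psi_lin3: "linear L \<Longrightarrow> linear (\<lambda>V. Psi L A B V)"
  unfolding Psi_def using linear_compose[OF lift_lin Om_lin3] by (simp add: o_def)

definition E1 :: "'n::finite \<Rightarrow> 'n rpt" where "E1 a = (((0,0),(axis a 1, 0)),(0,0))"
definition E2 :: "'n::finite \<Rightarrow> 'n rpt" where "E2 a = (((0,0),(0, axis a 1)),(0,0))"
definition E3 :: "'n::finite \<Rightarrow> 'n rpt" where "E3 a = (((0,0),(0,0)),(axis a 1, 0))"
definition E4 :: "'n::finite \<Rightarrow> 'n rpt" where "E4 a = (((0,0),(0,0)),(0, axis a 1))"

lemma axis_sum1: "(\<Sum>b\<in>UNIV. f b * (axis a (1::real) $ b)) = f a"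
proof -
  have "(\<Sum>b\<in>UNIV. f b * (axis a (1::real) $ b)) = (\<Sum>b\<in>UNIV. if b = a then f b else 0)"
    by (rule sum.cong) (auto simp: axis_def)
  then show ?thesis by simp
qed
lemma axis_sum2: "(\<Sum>b\<in>UNIV. (axis a (1::real) $ b) * f b) = f a"
  using axis_sum1[of f a] by (simp add: mult.commute)

lemma Psi_E1: "Psi L (E1 a) (((1,0),(a1,a2)),(b1,b2)) (((0,1),(c1,c2)),(d1,d2))
   = - L (E1 a) - b1$a + d2$a"
  by (simp add: Psi_def Om_def lift_def E1_def Theta_def lamC_def wedge_def kappa_def dt1_def dt2_def dq1_def dq2_def
      algebra_simps sum_negf axis_sum1 axis_sum2)
lemma Psi_E2: "Psi L (E2 a) (((1,0),(a1,a2)),(b1,b2)) (((0,1),(c1,c2)),(d1,d2))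
   = - L (E2 a) - b2$a - d1$a"
  by (simp add: Psi_def Om_def lift_def E2_def Theta_def lamC_def wedge_def kappa_def dt1_def dt2_def dq1_def dq2_def
      algebra_simps sum_negf axis_sum1 axis_sum2)
lemma Psi_E3: "Psi L (E3 a) (((1,0),(a1,a2)),(b1,b2)) (((0,1),(c1,c2)),(d1,d2))
   = - L (E3 a) + a1$a + c2$a"
  by (simp add: Psi_def Om_def lift_def E3_def Theta_def lamC_def wedge_def kappa_def dt1_def dt2_def dq1_def dq2_def
      algebra_simps sum_negf axis_sum1 axis_sum2)
lemma Psi_E4: "Psi L (E4 a) (((1,0),(a1,a2)),(b1,b2)) (((0,1),(c1,c2)),(d1,d2))
   = - L (E4 a) + a2$a - c1$a"
  by (simp add: Psi_def Om_def lift_def E4_def Theta_def lamC_def wedge_def kappa_def dt1_def dt2_def dq1_def dq2_def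
      algebra_simps sum_negf axis_sum1 axis_sum2)


lemma axis_sum3: "(\<Sum>b\<in>UNIV. f b * (axis b (1::real) $ i)) = f i"
proof -
  have "(\<Sum>b\<in>UNIV. f b * (axis b (1::real) $ i)) = (\<Sum>b\<in>UNIV. if b = i then f b else 0)"
    by (rule sum.cong) (auto simp: axis_def)
  then show ?thesis by simp
qed

lemma decomp: "(((0,0),(u1,u2)),(u3,u4)) = (\<Sum>a\<in>UNIV. u1$a *\<^sub>R E1 a + u2$a *\<^sub>R E2 a + u3$a *\<^sub>R E3 a + u4$a *\<^sub>R E4 a)"
  by (simp add: prod_eq_iff fst_sum snd_sum sum.distrib E1_def E2_def E3_def E4_def vec_eq_iff axis_sum3)

lemma Om_anti23: "Om u v w = - Om u w v"
  using Theta_anti[of u v w] by (simp add: Om_def)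

lemma core:
  fixes L :: "'n::finite rpt \<Rightarrow> real" and D :: "real \<times> real \<Rightarrow> 'n rpt"
  assumes L: "linear L" and D: "linear D"
    and DA: "D (1,0) = (((1,0),(a1,a2)),(b1,b2))" and DB: "D (0,1) = (((0,1),(c1,c2)),(d1,d2))"
  shows "(\<forall>V w1 w2. Psi L V (D w1) (D w2) = 0) \<longleftrightarrow>
    (\<forall>a. L (E1 a) = - b1$a + d2$a \<and> L (E2 a) = - b2$a - d1$a
       \<and> L (E3 a) = a1$a + c2$a \<and> L (E4 a) = a2$a - c1$a)"
proof
  assume h: "\<forall>V w1 w2. Psi L V (D w1) (D w2) = 0"
  show "\<forall>a. L (E1 a) = - b1$a + d2$a \<and> L (E2 a) = - b2$a - d1$a
       \<and> L (E3 a) = a1$a + c2$a \<and> L (E4 a) = a2$a - c1$a"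
  proof
    fix a
    have "Psi L (E1 a) (D (1,0)) (D (0,1)) = 0" "Psi L (E2 a) (D (1,0)) (D (0,1)) = 0"
      "Psi L (E3 a) (D (1,0)) (D (0,1)) = 0" "Psi L (E4 a) (D (1,0)) (D (0,1)) = 0"
      using h by blast+
    then show "L (E1 a) = - b1$a + d2$a \<and> L (E2 a) = - b2$a - d1$a
       \<and> L (E3 a) = a1$a + c2$a \<and> L (E4 a) = a2$a - c1$a"
      unfolding DA DB Psi_E1 Psi_E2 Psi_E3 Psi_E4 by linarith
  qed
next
  assume h: "\<forall>a. L (E1 a) = - b1$a + d2$a \<and> L (E2 a) = - b2$a - d1$a
       \<and> L (E3 a) = a1$a + c2$a \<and> L (E4 a) = a2$a - c1$a"
  define A where "A = (((1::real,0::real),(a1,a2)),(b1,b2))"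
  define B where "B = (((0::real,1::real),(c1,c2)),(d1,d2))"
  have AB0: "Psi L V A B = 0" for V
  proof -
    obtain s1 s2 r1 r2 R1 R2 where V: "V = (((s1,s2),(r1,r2)),(R1,R2))"
      by (metis prod.collapse)
    define u1 where "u1 = r1 - s1 *\<^sub>R a1 - s2 *\<^sub>R c1"
    define u2 where "u2 = r2 - s1 *\<^sub>R a2 - s2 *\<^sub>R c2"
    define u3 where "u3 = R1 - s1 *\<^sub>R b1 - s2 *\<^sub>R d1"
    define u4 where "u4 = R2 - s1 *\<^sub>R b2 - s2 *\<^sub>R d2"
    define V0 where "V0 = (((0::real,0::real),(u1,u2)),(u3,u4))"
    have VV: "V = V0 + s1 *\<^sub>R A + s2 *\<^sub>R B"
      by (simp add: V V0_def A_def B_def u1_def u2_def u3_def u4_def)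
    have l1: "linear (\<lambda>V. Psi L V A B)" by (rule Psi_lin1[OF L])
    have "Psi L V A B = Psi L V0 A B + s1 * Psi L A A B + s2 * Psi L B A B"
      unfolding VV using linear_add[OF l1] linear_scale[OF l1] by simp
    also have "\<dots> = Psi L V0 A B"
      by (simp add: Psi_def Om_alt1 Om_alt3)
    also have "\<dots> = (\<Sum>a\<in>UNIV. u1$a * Psi L (E1 a) A B + u2$a * Psi L (E2 a) A B
        + u3$a * Psi L (E3 a) A B + u4$a * Psi L (E4 a) A B)"
      unfolding V0_def decomp linear_sum[OF l1] using linear_add[OF l1] linear_scale[OF l1] by simp
    also have "\<dots> = 0"
      using h by (simp add: A_def B_def Psi_E1 Psi_E2 Psi_E3 Psi_E4)
    finally show ?thesis .
  qed
  show "\<forall>V w1 w2. Psi L V (D w1) (D w2) = 0"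
  proof (intro allI)
    fix V and w1 w2 :: "real \<times> real"
    have Dw: "D w = fst w *\<^sub>R A + snd w *\<^sub>R B" for w
    proof -
      have "w = fst w *\<^sub>R (1,0) + snd w *\<^sub>R (0,1)" by (simp add: prod_eq_iff)
      then have "D w = D (fst w *\<^sub>R (1,0) + snd w *\<^sub>R (0,1))" by simp
      also have "\<dots> = fst w *\<^sub>R D (1,0) + snd w *\<^sub>R D (0,1)"
        by (simp only: linear_add[OF D] linear_scale[OF D])
      also have "\<dots> = fst w *\<^sub>R A + snd w *\<^sub>R B"
        using DA DB by (simp add: A_def B_def)
      finally show ?thesis .
    qed
    have l2: "linear (\<lambda>X. Psi L V X Y)" for Y by (rule Psi_lin2[OF L])
    have l3: "linear (\<lambda>Y. Psi L V X Y)" for X by (rule Psi_lin3[OF L])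
    have "Psi L V (D w1) (D w2) = fst w1 * (fst w2 * Psi L V A A + snd w2 * Psi L V A B)
       + snd w1 * (fst w2 * Psi L V B A + snd w2 * Psi L V B B)"
      unfolding Dw linear_add[OF l2] linear_scale[OF l2] linear_add[OF l3] linear_scale[OF l3]
      by (simp add: algebra_simps)
    also have "\<dots> = 0"
      using AB0[of V] Om_anti23[of "lift L V" "lift L B" "lift L A"] by (simp add: Psi_def Om_alt2)
    finally show "Psi L V (D w1) (D w2) = 0" .
  qed
qed


theorem mainTheorem1:
  fixes U :: "(real \<times> real) set" and W :: "'n::finite rpt set"
    and H :: "'n rpt \<Rightarrow> real"
    and q1 q2 P1 P2 :: "real \<times> real \<Rightarrow> real^'n"
  assumes "open U" and "open W"
    and "Zsec q1 q2 P1 P2 ` U \<subseteq> W"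
    and "\<forall>x\<in>W. H differentiable (at x)"
    and "\<forall>t\<in>U. q1 differentiable (at t) \<and> q2 differentiable (at t)
                 \<and> P1 differentiable (at t) \<and> P2 differentiable (at t)"
  shows "is_solution_on U H (Zsec q1 q2 P1 P2) \<longleftrightarrow>
    (\<forall>t\<in>U. \<forall>a::'n.
       let x = Zsec q1 q2 P1 P2 t;
           DH = frechet_derivative H (at x);
           d1 = (\<lambda>f. frechet_derivative f (at t) (1, 0) $ a);
           d2 = (\<lambda>f. frechet_derivative f (at t) (0, 1) $ a)
       in DH (((0, 0), (axis a 1, 0)), (0, 0)) = - d1 P1 + d2 P2
        \<and> DH (((0, 0), (0, axis a 1)), (0, 0)) = - d1 P2 - d2 P1
        \<and> DH (((0, 0), (0, 0)), (axis a 1, 0)) = d1 q1 + d2 q2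
        \<and> DH (((0, 0), (0, 0)), (0, axis a 1)) = d1 q2 - d2 q1)"
proof -
  define Z where "Z = Zsec q1 q2 P1 P2"
  define L where "L t = frechet_derivative H (at (Z t))" for t
  define DZ where "DZ t = (\<lambda>w. ((w, (frechet_derivative q1 (at t) w, frechet_derivative q2 (at t) w)),
      (frechet_derivative P1 (at t) w, frechet_derivative P2 (at t) w)))" for t
  have hL: "(H has_derivative L t) (at (Z t))" if "t \<in> U" for t
  proof -
    have "Z t \<in> W" using assms(3) that by (auto simp: Z_def)
    then show ?thesis using assms(4) by (simp add: L_def frechet_derivative_works)
  qed
  have linL: "linear (L t)" if "t \<in> U" for t
    using hL[OF that] has_derivative_bounded_linear bounded_linear.linear by blast
  have hZ: "(Z has_derivative DZ t) (at t)" if "t \<in> U" for t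
  proof -
    have Zf: "Z = (\<lambda>t. ((t, (q1 t, q2 t)), (P1 t, P2 t)))"
      by (rule ext) (simp add: Z_def Zsec_def)
    show ?thesis unfolding Zf DZ_def
      using assms(5) that
      by (intro has_derivative_Pair has_derivative_ident)
         (auto simp: frechet_derivative_works[symmetric])
  qed
  have linDZ: "linear (DZ t)" if "t \<in> U" for t
    using hZ[OF that] has_derivative_bounded_linear bounded_linear.linear by blast
  have hh: "(hsec H has_derivative lift (L t)) (at (Z t))" if "t \<in> U" for t
  proof -
    have "hsec H = (\<lambda>x. (x, - H x))" by (rule ext) (simp add: hsec_def)
    moreover have "lift (L t) = (\<lambda>u. (u, - L t u))" by (rule ext) (simp add: lift_def)
    ultimately show ?thesis
      using hL[OF that] by (auto intro!: has_derivative_Pair has_derivative_ident has_derivative_minus)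
  qed
  have pw: "pull2 Z (contract X (OmegaH H)) t w1 w2 = Psi (L t) (X (Z t)) (DZ t w1) (DZ t w2)"
    if "t \<in> U" for X t w1 w2
    unfolding pull2_def contract_def OmegaH_def pull3_def
      frechet_derivative_at[OF hZ[OF that], symmetric]
      frechet_derivative_at[OF hh[OF that], symmetric]
    by (simp add: Omega_eq Psi_def)
  have sol: "is_solution_on U H Z \<longleftrightarrow> (\<forall>t\<in>U. \<forall>V w1 w2. Psi (L t) V (DZ t w1) (DZ t w2) = 0)"
  proof
    assume s: "is_solution_on U H Z"
    show "\<forall>t\<in>U. \<forall>V w1 w2. Psi (L t) V (DZ t w1) (DZ t w2) = 0"
    proof (intro ballI allI)
      fix t V w1 w2 assume t: "t \<in> U"
      have "pull2 Z (contract (\<lambda>_. V) (OmegaH H)) t w1 w2 = 0"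
        using s t unfolding is_solution_on_def by blast
      then show "Psi (L t) V (DZ t w1) (DZ t w2) = 0" using pw[OF t] by simp
    qed
  next
    assume s: "\<forall>t\<in>U. \<forall>V w1 w2. Psi (L t) V (DZ t w1) (DZ t w2) = 0"
    show "is_solution_on U H Z"
      unfolding is_solution_on_def
    proof (intro allI ballI)
      fix X t w1 w2 assume t: "t \<in> U"
      show "pull2 Z (contract X (OmegaH H)) t w1 w2 = 0"
        unfolding pw[OF t] using s t by blast
    qed
  qed
  have pt: "(\<forall>V w1 w2. Psi (L t) V (DZ t w1) (DZ t w2) = 0) \<longleftrightarrow>
    (\<forall>a::'n.
       let x = Zsec q1 q2 P1 P2 t;
           DH = frechet_derivative H (at x);
           d1 = (\<lambda>f. frechet_derivative f (at t) (1, 0) $ a);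
           d2 = (\<lambda>f. frechet_derivative f (at t) (0, 1) $ a)
       in DH (((0, 0), (axis a 1, 0)), (0, 0)) = - d1 P1 + d2 P2
        \<and> DH (((0, 0), (0, axis a 1)), (0, 0)) = - d1 P2 - d2 P1
        \<and> DH (((0, 0), (0, 0)), (axis a 1, 0)) = d1 q1 + d2 q2
        \<and> DH (((0, 0), (0, 0)), (0, axis a 1)) = d1 q2 - d2 q1)"
    if "t \<in> U" for t
    using core[OF linL[OF that] linDZ[OF that], of
        "frechet_derivative q1 (at t) (1,0)" "frechet_derivative q2 (at t) (1,0)"
        "frechet_derivative P1 (at t) (1,0)" "frechet_derivative P2 (at t) (1,0)"
        "frechet_derivative q1 (at t) (0,1)" "frechet_derivative q2 (at t) (0,1)"
        "frechet_derivative P1 (at t) (0,1)" "frechet_derivative P2 (at t) (0,1)"]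
    by (simp add: DZ_def L_def Z_def E1_def E2_def E3_def E4_def Let_def)
  show ?thesis
    using sol pt unfolding Z_def by (meson ball_cong)
qed

end
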